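(* Let $(X,d)$ be a compact metric space and $f\in\mathcal{H}(X)$. If $\dim X=0$ and every point of $X$ is a periodic point of $f$ (i.e. $X=Per(f)$), then $f$ is equicontinuous and has the strict periodic shadowing property.
   Context: Equicontinuous: for every $\epsilon>0$ there is $\delta>0$ with $d(x,y)\le\delta\Rightarrow\sup_{i\in\mathbb{Z}}d(f^i(x),f^i(y))\le\epsilon$. Strict periodic shadowing property: for every $\epsilon>0$ there is $\delta>0$ such that for every $(x_i)_{i=0}^m$, $m\ge1$, with $d(f(x_i),x_{i+1})\le\delta$ for $0\le i<m$ and $x_0=x_m$, there is $p\in X$ with $f^m(p)=p$ and $d(x_i,f^i(p))\le\epsilon$ for $0\le i\le m$. *)

theory Defs
  imports "HOL-Analysis.Analysis"
begin

definition fiter :: "'a set \<Rightarrow> ('a \<Rightarrow> 'a) \<Rightarrow> int \<Rightarrow> 'a \<Rightarrow> 'a" where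
  "fiter S f i x = (if 0 \<le> i then (f ^^ nat i) x else (inv_into S f ^^ nat (- i)) x)"

text \<open>Small inductive dimension zero: S nonempty (ind of the empty space is -1) and every
  point has a neighbourhood base of relatively clopen sets.\<close>
definition zero_dim :: "'a::topological_space set \<Rightarrow> bool" where
  "zero_dim S \<longleftrightarrow> S \<noteq> {} \<and>
     (\<forall>x\<in>S. \<forall>V. openin (top_of_set S) V \<and> x \<in> V \<longrightarrow>
        (\<exists>U. openin (top_of_set S) U \<and> closedin (top_of_set S) U \<and> x \<in> U \<and> U \<subseteq> V))"

definition periodic_point :: "('a \<Rightarrow> 'a) \<Rightarrow> 'a \<Rightarrow> bool" where
  "periodic_point f x \<longleftrightarrow> (\<exists>n>0. (f ^^ n) x = x)"

definition equicontinuous_on :: "'a::metric_space set \<Rightarrow> ('a \<Rightarrow> 'a) \<Rightarrow> bool" where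
  "equicontinuous_on S f \<longleftrightarrow>
     (\<forall>e>0. \<exists>d>0. \<forall>x\<in>S. \<forall>y\<in>S. dist x y \<le> d \<longrightarrow>
        (\<forall>i::int. dist (fiter S f i x) (fiter S f i y) \<le> e))"

definition strict_periodic_shadowing :: "'a::metric_space set \<Rightarrow> ('a \<Rightarrow> 'a) \<Rightarrow> bool" where
  "strict_periodic_shadowing S f \<longleftrightarrow>
     (\<forall>e>0. \<exists>d>0. \<forall>m::nat. \<forall>xs::nat \<Rightarrow> 'a.
        m \<ge> 1 \<and> (\<forall>i\<le>m. xs i \<in> S) \<and> (\<forall>i<m. dist (f (xs i)) (xs (Suc i)) \<le> d) \<and> xs 0 = xs m
        \<longrightarrow> (\<exists>p\<in>S. (f ^^ m) p = p \<and> (\<forall>i\<le>m. dist (xs i) ((f ^^ i) p) \<le> e)))"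

end

theory Submission
  imports Defs
begin

definition sp :: "'a set set \<Rightarrow> 'a \<Rightarrow> 'a \<Rightarrow> bool" where
  "sp \<U> u v \<longleftrightarrow> (\<forall>U\<in>\<U>. u \<in> U \<longleftrightarrow> v \<in> U)"

definition eqv :: "'a set set \<Rightarrow> ('a \<Rightarrow> 'a) \<Rightarrow> 'a \<Rightarrow> 'a \<Rightarrow> bool" where
  "eqv \<U> f x y \<longleftrightarrow> (\<forall>t. sp \<U> ((f^^t) x) ((f^^t) y))"

lemma sp_refl: "sp \<U> u u" by (simp add: sp_def)
lemma sp_sym: "sp \<U> u v \<Longrightarrow> sp \<U> v u" by (simp add: sp_def)
lemma sp_trans: "sp \<U> u v \<Longrightarrow> sp \<U> v w \<Longrightarrow> sp \<U> u w" by (simp add: sp_def)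
lemma sp_mono: "sp \<U> u v \<Longrightarrow> \<V> \<subseteq> \<U> \<Longrightarrow> sp \<V> u v" by (auto simp add: sp_def)

lemma iter_cont:
  assumes "continuous_on S h" "h ` S \<subseteq> S"
  shows "continuous_on S (h^^k) \<and> (h^^k) ` S \<subseteq> S"
proof (induction k)
  case 0 then show ?case by (simp add: continuous_on_id)
next
  case (Suc k)
  then have c: "continuous_on S (h^^k)" and s: "(h^^k) ` S \<subseteq> S" by auto
  have "continuous_on S (h \<circ> (h^^k))"
    by (rule continuous_on_compose[OF c]) (rule continuous_on_subset[OF assms(1) s])
  moreover have "(h \<circ> (h^^k)) ` S \<subseteq> S" using s assms(2) by auto
  ultimately show ?case by simp
qed

lemma iter_in: "h ` S \<subseteq> S \<Longrightarrow> x \<in> S \<Longrightarrow> (h^^k) x \<in> S"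
  by (induction k) auto

lemma sp_clopen:
  assumes fin: "finite \<U>" and cl: "\<forall>U\<in>\<U>. openin (top_of_set S) U \<and> closedin (top_of_set S) U"
    and h: "continuous_on S h" "h ` S \<subseteq> S"
  shows "openin (top_of_set S) {u\<in>S. sp \<U> (h u) c} \<and> closedin (top_of_set S) {u\<in>S. sp \<U> (h u) c}"
proof -
  define F where "F = (\<lambda>U. if c \<in> U then S \<inter> h -` U else S - (S \<inter> h -` U))"
  have eq: "{u\<in>S. sp \<U> (h u) c} = \<Inter>(insert S (F ` \<U>))"
  proof (rule set_eqI, rule iffI)
    fix u assume "u \<in> {u\<in>S. sp \<U> (h u) c}"
    then show "u \<in> \<Inter>(insert S (F ` \<U>))" by (auto simp: sp_def F_def)
  next
    fix u assume u: "u \<in> \<Inter>(insert S (F ` \<U>))"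
    then have "u \<in> S" by auto
    moreover have "h u \<in> U \<longleftrightarrow> c \<in> U" if "U \<in> \<U>" for U
    proof -
      have "u \<in> F U" using u that by blast
      then show ?thesis by (cases "c \<in> U") (auto simp: F_def)
    qed
    ultimately show "u \<in> {u\<in>S. sp \<U> (h u) c}" by (auto simp: sp_def)
  qed
  have hS: "h \<in> S \<rightarrow> S" using h(2) by auto
  have oc: "openin (top_of_set S) (F U) \<and> closedin (top_of_set S) (F U)" if "U \<in> \<U>" for U
  proof -
    have o: "openin (top_of_set S) (S \<inter> h -` U)"
      using continuous_openin_preimage[OF h(1) hS] cl that by blast
    have c: "closedin (top_of_set S) (S \<inter> h -` U)"
      using continuous_closedin_preimage_gen[OF h(1) hS] cl that by blast
    show ?thesis using o c unfolding F_def
      by (auto intro: openin_diff closedin_diff)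
  qed
  have S1: "openin (top_of_set S) S" "closedin (top_of_set S) S" by auto
  have "openin (top_of_set S) (\<Inter>(insert S (F ` \<U>)))"
    by (rule openin_Inter) (use oc fin S1 in auto)
  moreover have "closedin (top_of_set S) (\<Inter>(insert S (F ` \<U>)))"
    by (rule closedin_Inter) (use oc fin S1 in auto)
  ultimately show ?thesis unfolding eq by blast
qed

lemma nsp_clopen:
  assumes fin: "finite \<U>" and cl: "\<forall>U\<in>\<U>. openin (top_of_set S) U \<and> closedin (top_of_set S) U"
    and h: "continuous_on S h" "h ` S \<subseteq> S"
  shows "openin (top_of_set S) {u\<in>S. \<not> sp \<U> (h u) c} \<and> closedin (top_of_set S) {u\<in>S. \<not> sp \<U> (h u) c}"
proof -
  have eq: "{u\<in>S. \<not> sp \<U> (h u) c} = S - {u\<in>S. sp \<U> (h u) c}" by auto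
  show ?thesis unfolding eq using sp_clopen[OF assms]
    by (auto intro: openin_diff closedin_diff)
qed

lemma g_iter:
  assumes "\<forall>x\<in>S. g (f x) = x" "f ` S \<subseteq> S" "x \<in> S"
  shows "k \<le> r \<Longrightarrow> (g^^k) ((f^^r) x) = (f^^(r-k)) x"
proof (induction k)
  case 0 then show ?case by simp
next
  case (Suc k)
  then have "(g^^k) ((f^^r) x) = (f^^(r-k)) x" by simp
  moreover have "r - k = Suc (r - Suc k)" using Suc.prems by simp
  ultimately have "(g^^Suc k) ((f^^r) x) = g (f ((f^^(r - Suc k)) x))" by simp
  also have "\<dots> = (f^^(r - Suc k)) x" using assms iter_in[of f S x] by auto
  finally show ?case .
qed

lemma inv_iter:
  assumes "inj_on f S" "f ` S \<subseteq> S" "x \<in> S" "(f^^N) x = x"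
  shows "k \<le> N \<Longrightarrow> (inv_into S f ^^ k) x = (f^^(N-k)) x"
proof -
  assume k: "k \<le> N"
  have "(inv_into S f ^^ k) ((f^^N) x) = (f^^(N-k)) x"
    by (rule g_iter[OF _ assms(2,3) k]) (use assms(1) in auto)
  then show ?thesis using assms(4) by simp
qed

lemma funpow_mult_fix: "(f^^q) x = x \<Longrightarrow> (f^^(q*j)) x = x"
proof (induction j)
  case 0 then show ?case by simp
next
  case (Suc j)
  have "(f^^(q * Suc j)) x = (f^^q) ((f^^(q*j)) x)" by (simp add: funpow_add)
  then show ?case using Suc by simp
qed

lemma claimA:
  fixes S :: "'a::metric_space set"
  assumes S: "compact S" and fc: "continuous_on S f" and fS: "f ` S \<subseteq> S"
    and gc: "continuous_on S g" and gS: "g ` S \<subseteq> S" and gf: "\<forall>x\<in>S. g (f x) = x"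
    and per: "\<forall>x\<in>S. \<exists>q>0. (f^^q) x = x"
    and fin: "finite \<U>" and cl: "\<forall>U\<in>\<U>. openin (top_of_set S) U \<and> closedin (top_of_set S) U"
    and z: "z \<in> S"
  shows "\<exists>T. \<forall>w\<in>S. (\<forall>t\<le>T. sp \<U> ((f^^t) w) ((f^^t) z)) \<longrightarrow> eqv \<U> f w z"
proof (rule ccontr)
  assume H: "\<not> ?thesis"
  obtain n where n: "n > 0" "(f^^n) z = z" using per z by blast
  define K where "K T s = {u\<in>S. \<not> sp \<U> u ((f^^s) z) \<and>
     (\<forall>k\<in>{1..T}. sp \<U> ((g^^k) u) ((g^^k) ((f^^s) z)))}" for T s
  have a: "\<exists>s<n. K T s \<noteq> {}" for T
  proof -
    from H obtain w where w: "w \<in> S" "\<forall>t\<le>T. sp \<U> ((f^^t) w) ((f^^t) z)" "\<not> eqv \<U> f w z"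
      by blast
    then have ex: "\<exists>r. \<not> sp \<U> ((f^^r) w) ((f^^r) z)" by (auto simp: eqv_def)
    define r where "r = (LEAST r. \<not> sp \<U> ((f^^r) w) ((f^^r) z))"
    have nr: "\<not> sp \<U> ((f^^r) w) ((f^^r) z)" unfolding r_def by (rule LeastI_ex[OF ex])
    have bef: "sp \<U> ((f^^t) w) ((f^^t) z)" if "t < r" for t
      using not_less_Least[OF that[unfolded r_def]] by blast
    have rT: "T < r" using nr w(2) by (meson not_le)
    define s where "s = r mod n"
    have fs: "(f^^s) z = (f^^r) z" unfolding s_def by (rule funpow_mod_eq[OF n(2)])
    have "(f^^r) w \<in> K T s"
      unfolding K_def
    proof (intro CollectI conjI ballI)
      show "(f^^r) w \<in> S" using iter_in[OF fS w(1)] .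
      show "\<not> sp \<U> ((f^^r) w) ((f^^s) z)" using nr fs by simp
      fix k assume k: "k \<in> {1..T}"
      then have kr: "k \<le> r" using rT by auto
      have "(g^^k) ((f^^r) w) = (f^^(r-k)) w" by (rule g_iter[OF gf fS w(1) kr])
      moreover have "(g^^k) ((f^^s) z) = (f^^(r-k)) z" unfolding fs by (rule g_iter[OF gf fS z kr])
      moreover have "r - k < r" using k kr by auto
      ultimately show "sp \<U> ((g^^k) ((f^^r) w)) ((g^^k) ((f^^s) z))" using bef by simp
    qed
    moreover have "s < n" unfolding s_def using n by simp
    ultimately show ?thesis by blast
  qed
  have mono: "K T' s \<subseteq> K T s" if "T \<le> T'" for T T' s
    using that by (auto simp: K_def)
  obtain s where s: "s < n" "\<forall>T. K T s \<noteq> {}"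
  proof (rule ccontr)
    assume "\<not> thesis"
    with that have "\<forall>s<n. \<exists>T. K T s = {}" by blast
    then obtain Tf where Tf: "\<forall>s<n. K (Tf s) s = {}" by metis
    define T0 where "T0 = (\<Sum>s<n. Tf s)"
    obtain s where s: "s < n" "K T0 s \<noteq> {}" using a by blast
    have "Tf s \<le> T0" unfolding T0_def by (rule member_le_sum) (use s in auto)
    then show False using mono[of "Tf s" T0 s] Tf s by auto
  qed
  define c where "c = (f^^s) z"
  have closedK: "closed (K T s)" for T
  proof -
    have idc: "continuous_on S (\<lambda>u. u)" "(\<lambda>u. u) ` S \<subseteq> S" by (auto simp: continuous_on_id)
    have eqK: "K T s = \<Inter>(insert {u\<in>S. \<not> sp \<U> ((\<lambda>u. u) u) c}
        ((\<lambda>k. {u\<in>S. sp \<U> ((g^^k) u) ((g^^k) c)}) ` {1..T}))"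
      by (auto simp: K_def c_def)
    have "closedin (top_of_set S) (K T s)"
      unfolding eqK
      apply (rule closedin_Inter)
      using nsp_clopen[OF fin cl idc] sp_clopen[OF fin cl conjunct1[OF iter_cont[OF gc gS]] conjunct2[OF iter_cont[OF gc gS]]] by auto
    then show ?thesis using closedin_closed_trans compact_imp_closed[OF S] by blast
  qed
  have "S \<inter> (\<Inter>T\<in>UNIV. K T s) \<noteq> {}"
  proof (rule compact_imp_fip_image[OF S])
    show "closed (K T s)" for T by (rule closedK)
    fix I' :: "nat set" assume I': "finite I'" "I' \<subseteq> UNIV"
    have "K (\<Sum>I') s \<subseteq> S \<inter> (\<Inter>T\<in>I'. K T s)"
    proof -
      have "K (\<Sum>I') s \<subseteq> K T s" if "T \<in> I'" for T
        by (rule mono) (rule member_le_sum[of T I' "\<lambda>x. x", simplified], use that I' in auto)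
      moreover have "K (\<Sum>I') s \<subseteq> S" by (auto simp: K_def)
      ultimately show ?thesis by blast
    qed
    then show "S \<inter> (\<Inter>T\<in>I'. K T s) \<noteq> {}" using s(2) by blast
  qed
  then obtain e where e: "e \<in> S" "\<And>T. e \<in> K T s" by blast
  then have ne: "\<not> sp \<U> e c" using e(2)[of 0] by (auto simp: K_def c_def)
  obtain q where q: "q > 0" "(f^^q) e = e" using per e(1) by blast
  define k where "k = q * n"
  have k1: "k \<in> {1..k}" using q n by (simp add: k_def)
  have "sp \<U> ((g^^k) e) ((g^^k) c)" using e(2)[of k] k1 by (auto simp: K_def c_def)
  moreover have "(g^^k) e = e"
  proof -
    have "(f^^k) e = e" unfolding k_def by (rule funpow_mult_fix[OF q(2)])
    then have "(g^^k) e = (g^^k) ((f^^k) e)" by simp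
    also have "\<dots> = e" using g_iter[OF gf fS e(1), of k k] by simp
    finally show ?thesis .
  qed
  moreover have "(g^^k) c = c"
  proof -
    have cS: "c \<in> S" unfolding c_def by (rule iter_in[OF fS z])
    have "(f^^n) c = c" unfolding c_def
      by (metis funpow_add add.commute comp_apply n(2))
    then have "(f^^k) c = c" unfolding k_def using funpow_mult_fix[where f=f and q=n and x=c and j=q] by (simp add: mult.commute)
    then have "(g^^k) c = (g^^k) ((f^^k) c)" by simp
    also have "\<dots> = c" using g_iter[OF gf fS cS, of k k] by simp
    finally show ?thesis .
  qed
  ultimately show False using ne by simp
qed

lemma eqv_sym: "eqv \<U> f x y \<Longrightarrow> eqv \<U> f y x" by (auto simp: eqv_def sp_def)
lemma eqv_trans: "eqv \<U> f x y \<Longrightarrow> eqv \<U> f y z \<Longrightarrow> eqv \<U> f x z" by (auto simp: eqv_def sp_def)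
lemma eqv_refl: "eqv \<U> f x x" by (auto simp: eqv_def sp_def)
lemma eqv_f: "eqv \<U> f x y \<Longrightarrow> eqv \<U> f (f x) (f y)"
  unfolding eqv_def by (metis funpow_Suc_right comp_apply)
lemma eqv_fn: "eqv \<U> f x y \<Longrightarrow> eqv \<U> f ((f^^k) x) ((f^^k) y)"
  by (induction k) (auto intro: eqv_f)
lemma eqv_mono: "eqv \<U> f x y \<Longrightarrow> \<V> \<subseteq> \<U> \<Longrightarrow> eqv \<V> f x y"
  by (auto simp: eqv_def sp_def)

lemma lemmaL:
  fixes S :: "'a::metric_space set"
  assumes S: "compact S" and fc: "continuous_on S f" and fS: "f ` S \<subseteq> S"
    and gc: "continuous_on S g" and gS: "g ` S \<subseteq> S" and gf: "\<forall>x\<in>S. g (f x) = x"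
    and per: "\<forall>x\<in>S. \<exists>q>0. (f^^q) x = x"
    and fin: "finite \<U>" and cl: "\<forall>U\<in>\<U>. openin (top_of_set S) U \<and> closedin (top_of_set S) U"
  shows "\<exists>d>0. \<forall>x\<in>S. \<forall>y\<in>S. dist x y < d \<longrightarrow> eqv \<U> f x y"
proof -
  have "\<forall>z\<in>S. \<exists>T. \<forall>w\<in>S. (\<forall>t\<le>T. sp \<U> ((f^^t) w) ((f^^t) z)) \<longrightarrow> eqv \<U> f w z"
    using claimA[OF assms] by blast
  then obtain Tz where Tz: "\<And>z w. z \<in> S \<Longrightarrow> w \<in> S \<Longrightarrow> (\<forall>t\<le>Tz z. sp \<U> ((f^^t) w) ((f^^t) z)) \<Longrightarrow> eqv \<U> f w z"
    by metis
  define A where "A z = {w\<in>S. \<forall>t\<le>Tz z. sp \<U> ((f^^t) w) ((f^^t) z)}" for z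
  have opA: "openin (top_of_set S) (A z)" if "z \<in> S" for z
  proof -
    have eq: "A z = \<Inter>(insert S ((\<lambda>t. {w\<in>S. sp \<U> ((f^^t) w) ((f^^t) z)}) ` {..Tz z}))"
      by (auto simp: A_def)
    show ?thesis unfolding eq
      apply (rule openin_Inter)
      using sp_clopen[OF fin cl conjunct1[OF iter_cont[OF fc fS]] conjunct2[OF iter_cont[OF fc fS]]] by auto
  qed
  have "\<forall>z\<in>S. \<exists>Op. open Op \<and> A z = S \<inter> Op" using opA by (meson openin_open)
  then obtain Op where Op: "\<And>z. z \<in> S \<Longrightarrow> open (Op z) \<and> A z = S \<inter> Op z" by metis
  have zA: "z \<in> A z" if "z \<in> S" for z using that by (auto simp: A_def sp_refl)
  obtain d where d: "0 < d" "\<And>x. x \<in> S \<Longrightarrow> \<exists>G \<in> Op ` S. ball x d \<subseteq> G"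
  proof (rule Heine_Borel_lemma[OF S])
    show "S \<subseteq> \<Union>(Op ` S)" using zA Op by blast
    show "\<And>G. G \<in> Op ` S \<Longrightarrow> open G" using Op by blast
  qed (use that in blast)
  have "eqv \<U> f x y" if xy: "x \<in> S" "y \<in> S" "dist x y < d" for x y
  proof -
    obtain z where z: "z \<in> S" "ball x d \<subseteq> Op z" using d(2)[OF xy(1)] by blast
    have "x \<in> A z" "y \<in> A z" using z Op[OF z(1)] xy d(1) by (auto simp: dist_commute)
    then have "eqv \<U> f x z" "eqv \<U> f y z" using Tz z(1) by (auto simp: A_def)
    then show ?thesis by (meson eqv_sym eqv_trans)
  qed
  then show ?thesis using d(1) by blast
qed

definition good :: "'a::metric_space set \<Rightarrow> ('a \<Rightarrow> 'a) \<Rightarrow> 'a set set \<Rightarrow> real \<Rightarrow> real \<Rightarrow> bool" where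
  "good S f \<U> r d \<longleftrightarrow> finite \<U> \<and> (\<forall>U\<in>\<U>. openin (top_of_set S) U \<and> closedin (top_of_set S) U)
      \<and> (\<forall>x\<in>S. \<exists>U\<in>\<U>. x \<in> U) \<and> (\<forall>U\<in>\<U>. \<forall>a\<in>U. \<forall>b\<in>U. dist a b < r)
      \<and> d > 0 \<and> (\<forall>x\<in>S. \<forall>z\<in>S. dist x z < d \<longrightarrow> eqv \<U> f x z)"

lemma clopen_cover:
  fixes S :: "'a::metric_space set"
  assumes S: "compact S" and z: "zero_dim S" and e: "e > 0"
  shows "\<exists>\<U>. finite \<U> \<and> (\<forall>U\<in>\<U>. openin (top_of_set S) U \<and> closedin (top_of_set S) U)
     \<and> (\<forall>x\<in>S. \<exists>U\<in>\<U>. x \<in> U) \<and> (\<forall>U\<in>\<U>. \<forall>a\<in>U. \<forall>b\<in>U. dist a b < e)"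
proof -
  have "\<exists>U. openin (top_of_set S) U \<and> closedin (top_of_set S) U \<and> x \<in> U \<and> U \<subseteq> S \<inter> ball x (e/2)"
    if "x \<in> S" for x
  proof -
    have "openin (top_of_set S) (S \<inter> ball x (e/2))" by (simp add: openin_open_Int)
    moreover have "x \<in> S \<inter> ball x (e/2)" using that e by auto
    ultimately show ?thesis using z that unfolding zero_dim_def by blast
  qed
  then have "\<forall>x\<in>S. \<exists>U. openin (top_of_set S) U \<and> closedin (top_of_set S) U \<and> x \<in> U \<and> U \<subseteq> S \<inter> ball x (e/2)"
    by blast
  then obtain Ux where Ux0: "\<forall>x\<in>S. openin (top_of_set S) (Ux x) \<and> closedin (top_of_set S) (Ux x) \<and> x \<in> Ux x \<and> Ux x \<subseteq> S \<inter> ball x (e/2)"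
    by (rule bchoice[elim_format]) blast
  have Ux: "\<And>x. x \<in> S \<Longrightarrow> openin (top_of_set S) (Ux x) \<and> closedin (top_of_set S) (Ux x) \<and> x \<in> Ux x \<and> Ux x \<subseteq> S \<inter> ball x (e/2)"
    using Ux0 by blast
  have "\<forall>x\<in>S. \<exists>Op. open Op \<and> Ux x = S \<inter> Op"
    proof
      fix x assume "x \<in> S"
      then have "openin (top_of_set S) (Ux x)" using Ux by blast
      then show "\<exists>Op. open Op \<and> Ux x = S \<inter> Op" by (simp add: openin_open)
    qed
  then obtain Op where Op0: "\<forall>x\<in>S. open (Op x) \<and> Ux x = S \<inter> Op x" by (rule bchoice[elim_format]) blast
  have Op: "\<And>x. x \<in> S \<Longrightarrow> open (Op x) \<and> Ux x = S \<inter> Op x" using Op0 by blast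
  obtain C' where C': "C' \<subseteq> S" "finite C'" "S \<subseteq> (\<Union>c\<in>C'. Op c)"
  proof (rule compactE_image[OF S, of S Op])
    show "\<And>T. T \<in> S \<Longrightarrow> open (Op T)" using Op by blast
    show "S \<subseteq> (\<Union>c\<in>S. Op c)"
    proof
      fix x assume x: "x \<in> S"
      then have "x \<in> Op x" using Op[OF x] Ux[OF x] by auto
      then show "x \<in> (\<Union>c\<in>S. Op c)" using x by blast
    qed
  qed (use that in blast)
  show ?thesis
  proof (intro exI[of _ "Ux ` C'"] conjI)
    show "finite (Ux ` C')" using C' by simp
    show "\<forall>U\<in>Ux ` C'. openin (top_of_set S) U \<and> closedin (top_of_set S) U" using Ux C'(1) by auto
    show "\<forall>x\<in>S. \<exists>U\<in>Ux ` C'. x \<in> U"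
    proof
      fix x assume x: "x \<in> S"
      then obtain c where c: "c \<in> C'" "x \<in> Op c" using C'(3) by blast
      then have "x \<in> Ux c" using Op[of c] C'(1) x by auto
      then show "\<exists>U\<in>Ux ` C'. x \<in> U" using c by blast
    qed
    show "\<forall>U\<in>Ux ` C'. \<forall>a\<in>U. \<forall>b\<in>U. dist a b < e"
    proof (intro ballI)
      fix U a b assume U: "U \<in> Ux ` C'" and ab: "a \<in> U" "b \<in> U"
      then obtain c where c: "c \<in> C'" "U = Ux c" by blast
      have cS: "c \<in> S" using c C'(1) by blast
      have "a \<in> ball c (e/2)" "b \<in> ball c (e/2)" using Ux[OF cS] ab c by blast+
      then have "dist c a < e/2" "dist c b < e/2" by auto
      then show "dist a b < e" using dist_triangle[of a b c] dist_commute[of c a] by linarith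
    qed
  qed
qed

theorem proposition1p1:
  fixes S :: "'a::metric_space set" and f :: "'a \<Rightarrow> 'a"
  assumes "compact S"
    and "\<exists>g. homeomorphism S S f g"
    and "zero_dim S"
    and "\<forall>x\<in>S. periodic_point f x"
  shows "equicontinuous_on S f \<and> strict_periodic_shadowing S f"
proof -
  obtain g where hom: "homeomorphism S S f g" using assms(2) by blast
  have fc: "continuous_on S f" and fS: "f ` S \<subseteq> S" and gc: "continuous_on S g"
    and gS: "g ` S \<subseteq> S" and gf: "\<forall>x\<in>S. g (f x) = x"
    using hom unfolding homeomorphism_def by auto
  have per: "\<forall>x\<in>S. \<exists>q>0. (f^^q) x = x" using assms(4) unfolding periodic_point_def by blast
  have inj: "inj_on f S" using gf by (metis inj_on_inverseI)
  note L = lemmaL[OF assms(1) fc fS gc gS gf per]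
  have cov_dist: "dist u v < e" if c1: "sp \<U> u v" and c2: "u \<in> S" and c3: "\<forall>x\<in>S. \<exists>U\<in>\<U>. x \<in> U"
     and c4: "\<forall>U\<in>\<U>. \<forall>a\<in>U. \<forall>b\<in>U. dist a b < e" for \<U> u v e
  proof -
    obtain U where "U \<in> \<U>" "u \<in> U" using c2 c3 by blast
    moreover then have "v \<in> U" using c1 unfolding sp_def by blast
    ultimately show ?thesis using c4 by blast
  qed
  have equi: "equicontinuous_on S f"
    unfolding equicontinuous_on_def
  proof (intro allI impI)
    fix e :: real assume e: "e > 0"
    obtain \<U> where U: "finite \<U>" "\<forall>U\<in>\<U>. openin (top_of_set S) U \<and> closedin (top_of_set S) U"
      "\<forall>x\<in>S. \<exists>U\<in>\<U>. x \<in> U" "\<forall>U\<in>\<U>. \<forall>a\<in>U. \<forall>b\<in>U. dist a b < e"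
      using clopen_cover[OF assms(1,3) e] by blast
    obtain d where d: "d > 0" "\<forall>x\<in>S. \<forall>y\<in>S. dist x y < d \<longrightarrow> eqv \<U> f x y"
      using L[OF U(1,2)] by blast
    show "\<exists>d>0. \<forall>x\<in>S. \<forall>y\<in>S. dist x y \<le> d \<longrightarrow> (\<forall>i. dist (fiter S f i x) (fiter S f i y) \<le> e)"
    proof (intro exI[of _ "d/2"] conjI ballI impI allI)
      show "d/2 > 0" using d by simp
      fix x y i assume xy: "x \<in> S" "y \<in> S" "dist x y \<le> d/2"
      then have ex: "eqv \<U> f x y" using d by auto
      have key: "dist ((f^^t) x) ((f^^t) y) \<le> e" for t
      proof -
        have "sp \<U> ((f^^t) x) ((f^^t) y)" using ex by (simp add: eqv_def)
        then show ?thesis using cov_dist[OF _ iter_in[OF fS xy(1)] U(3,4)] by fastforce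
      qed
      show "dist (fiter S f i x) (fiter S f i y) \<le> e"
      proof (cases "0 \<le> i")
        case True then show ?thesis using key by (simp add: fiter_def)
      next
        case False
        define k where "k = nat (- i)"
        obtain nx where nx: "nx > 0" "(f^^nx) x = x" using per xy(1) by blast
        obtain ny where ny: "ny > 0" "(f^^ny) y = y" using per xy(2) by blast
        define N where "N = k * nx * ny"
        have kN: "k \<le> N" using nx ny by (simp add: N_def)
        have Nx: "(f^^N) x = x"
          using funpow_mult_fix[where f=f and q=nx and x=x and j="k*ny", OF nx(2)]
          by (simp add: N_def ac_simps)
        have Ny: "(f^^N) y = y"
          using funpow_mult_fix[where f=f and q=ny and x=y and j="k*nx", OF ny(2)]
          by (simp add: N_def ac_simps)
        have "fiter S f i x = (f^^(N-k)) x"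
          using False inv_iter[OF inj fS xy(1) Nx kN] by (simp add: fiter_def k_def)
        moreover have "fiter S f i y = (f^^(N-k)) y"
          using False inv_iter[OF inj fS xy(2) Ny kN] by (simp add: fiter_def k_def)
        ultimately show ?thesis using key by simp
      qed
    qed
  qed
  have shad: "strict_periodic_shadowing S f"
    unfolding strict_periodic_shadowing_def
  proof (intro allI impI)
    fix e :: real assume e: "e > 0"
    define np where "np y = (LEAST q. q > 0 \<and> (f^^q) y = y)" for y
    have np: "np y > 0" "(f^^(np y)) y = y" if "y \<in> S" for y
    proof -
      have "\<exists>q. q > 0 \<and> (f^^q) y = y" using per that by blast
      then have "np y > 0 \<and> (f^^(np y)) y = y" unfolding np_def by (rule LeastI_ex)
      then show "np y > 0" "(f^^(np y)) y = y" by auto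
    qed
    have npmin: "(f^^i) y \<noteq> y" if "0 < i" "i < np y" for y i
      using not_less_Least[OF that(2)[unfolded np_def]] that(1) by blast
    define ep where "ep y = Min (insert e ((\<lambda>i. dist y ((f^^i) y)) ` {1..<np y}))" for y
    have ep: "ep y > 0" "ep y \<le> e" "\<And>i. 0 < i \<Longrightarrow> i < np y \<Longrightarrow> ep y \<le> dist y ((f^^i) y)" for y
    proof -
      have fin: "finite (insert e ((\<lambda>i. dist y ((f^^i) y)) ` {1..<np y}))" by simp
      have pos: "0 < dist y ((f^^i) y)" if "i \<in> {1..<np y}" for i
        using npmin[of i y] that by auto
      show "ep y > 0" unfolding ep_def using e pos
        by (subst Min_gr_iff[OF fin]) auto
      show "ep y \<le> e" unfolding ep_def using fin by simp
      fix i assume "0 < i" "i < np y"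
      then show "ep y \<le> dist y ((f^^i) y)" unfolding ep_def using fin by (intro Min_le) auto
    qed
    have "\<forall>y\<in>S. \<exists>\<U> d. good S f \<U> (ep y) d"
    proof
      fix y assume "y \<in> S"
      obtain \<U> where U: "finite \<U>" "\<forall>U\<in>\<U>. openin (top_of_set S) U \<and> closedin (top_of_set S) U"
        "\<forall>x\<in>S. \<exists>U\<in>\<U>. x \<in> U" "\<forall>U\<in>\<U>. \<forall>a\<in>U. \<forall>b\<in>U. dist a b < ep y"
        using clopen_cover[OF assms(1,3) ep(1)[of y]] by blast
      from L[OF U(1,2)] obtain d where d: "d > 0" "\<forall>x\<in>S. \<forall>z\<in>S. dist x z < d \<longrightarrow> eqv \<U> f x z"
        by blast
      have "good S f \<U> (ep y) d" unfolding good_def using U d by (intro conjI)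
      then show "\<exists>\<U> d. good S f \<U> (ep y) d" by (intro exI)
    qed
    from bchoice[OF this] obtain Uf where "\<forall>y\<in>S. \<exists>d. good S f (Uf y) (ep y) d" ..
    from bchoice[OF this] obtain df where Ufd: "\<forall>y\<in>S. good S f (Uf y) (ep y) (df y)" ..
    have Uf: "finite (Uf y) \<and> (\<forall>U\<in>Uf y. openin (top_of_set S) U \<and> closedin (top_of_set S) U)
      \<and> (\<forall>x\<in>S. \<exists>U\<in>Uf y. x \<in> U) \<and> (\<forall>U\<in>Uf y. \<forall>a\<in>U. \<forall>b\<in>U. dist a b < ep y)
      \<and> df y > 0 \<and> (\<forall>x\<in>S. \<forall>z\<in>S. dist x z < df y \<longrightarrow> eqv (Uf y) f x z)" if "y \<in> S" for y
      using bspec[OF Ufd that] unfolding good_def by (elim conjE) (intro conjI)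
    obtain Y where Y: "Y \<subseteq> S" "finite Y" "S \<subseteq> (\<Union>y\<in>Y. ball y (df y))"
    proof (rule compactE_image[OF assms(1), of S "\<lambda>y. ball y (df y)"])
      show "S \<subseteq> (\<Union>y\<in>S. ball y (df y))"
      proof
        fix x assume "x \<in> S"
        then have "x \<in> ball x (df x)" using Uf[of x] by simp
        then show "x \<in> (\<Union>y\<in>S. ball y (df y))" using \<open>x \<in> S\<close> by blast
      qed
    qed (use that in auto)
    define Us where "Us = \<Union>(Uf ` Y)"
    have Us1: "finite Us" using Y Uf by (auto simp: Us_def)
    have Us2: "\<forall>U\<in>Us. openin (top_of_set S) U \<and> closedin (top_of_set S) U" using Y Uf by (auto simp: Us_def)
    obtain d where d: "d > 0" "\<forall>x\<in>S. \<forall>y\<in>S. dist x y < d \<longrightarrow> eqv Us f x y"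
      using L[OF Us1 Us2] by blast
    show "\<exists>d>0. \<forall>m xs. 1 \<le> m \<and> (\<forall>i\<le>m. xs i \<in> S) \<and> (\<forall>i<m. dist (f (xs i)) (xs (Suc i)) \<le> d) \<and> xs 0 = xs m \<longrightarrow>
        (\<exists>p\<in>S. (f ^^ m) p = p \<and> (\<forall>i\<le>m. dist (xs i) ((f ^^ i) p) \<le> e))"
    proof (intro exI[of _ "d/2"] conjI allI impI)
      show "d/2 > 0" using d by simp
      fix m xs assume H: "1 \<le> m \<and> (\<forall>i\<le>m. xs i \<in> S) \<and> (\<forall>i<m. dist (f (xs i)) (xs (Suc i)) \<le> d/2) \<and> xs 0 = xs m"
      have xsS: "xs i \<in> S" if "i \<le> m" for i using H that by blast
      have tr: "i \<le> m \<Longrightarrow> eqv Us f (xs i) ((f^^i) (xs 0))" for i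
      proof (induction i)
        case 0 then show ?case by (simp add: eqv_refl)
      next
        case (Suc i)
        have im: "i < m" "i \<le> m" using Suc.prems by auto
        have "dist (f (xs i)) (xs (Suc i)) \<le> d/2" using H im(1) by blast
        then have dd: "dist (xs (Suc i)) (f (xs i)) < d" using d(1) by (simp add: dist_commute)
        have fxS: "f (xs i) \<in> S" using fS xsS[OF im(2)] by blast
        have e1: "eqv Us f (xs (Suc i)) (f (xs i))"
          using d(2) xsS[OF Suc.prems] fxS dd by blast
        have e2: "eqv Us f (f (xs i)) (f ((f^^i) (xs 0)))" using eqv_f[OF Suc.IH[OF im(2)]] .
        have "eqv Us f (xs (Suc i)) (f ((f^^i) (xs 0)))" by (rule eqv_trans[OF e1 e2])
        then show ?case by simp
      qed
      have x0: "xs 0 \<in> S" using xsS by simp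
      obtain y where y: "y \<in> Y" "xs 0 \<in> ball y (df y)" using Y(3) x0 by blast
      have yS: "y \<in> S" using y Y(1) by blast
      note Uy = Uf[OF yS]
      have sub: "Uf y \<subseteq> Us" using y(1) unfolding Us_def by blast
      have dy: "dist y (xs 0) < df y" using y(2) by simp
      have x0y0: "eqv (Uf y) f y (xs 0)" using conjunct2[OF conjunct2[OF conjunct2[OF conjunct2[OF conjunct2[OF Uy]]]]] yS x0 dy by blast
      have x0y: "eqv (Uf y) f (xs 0) y" by (rule eqv_sym[OF x0y0])
      have trY: "eqv (Uf y) f (xs i) ((f^^i) y)" if "i \<le> m" for i
        by (rule eqv_trans[OF eqv_mono[OF tr[OF that] sub] eqv_fn[OF x0y, of i]])
      have fmy: "(f^^m) y = y"
      proof -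
        have "eqv (Uf y) f (xs m) ((f^^m) y)" using trY[of m] by simp
        then have "eqv (Uf y) f (xs 0) ((f^^m) y)" using H by simp
        then have "eqv (Uf y) f y ((f^^m) y)" by (rule eqv_trans[OF x0y0])
        then have sp0: "sp (Uf y) y ((f^^m) y)" unfolding eqv_def by (metis funpow_0)
        define b where "b = m mod np y"
        have fb: "(f^^b) y = (f^^m) y" unfolding b_def by (rule funpow_mod_eq[OF np(2)[OF yS]])
        have "b = 0"
        proof (rule ccontr)
          assume "b \<noteq> 0"
          then have "0 < b" "b < np y" using np(1)[OF yS] by (auto simp: b_def)
          then have "ep y \<le> dist y ((f^^b) y)" by (rule ep(3))
          moreover have "dist y ((f^^b) y) < ep y"
            using cov_dist[of "Uf y" y "(f^^b) y" "ep y"] sp0 fb yS Uy by simp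
          ultimately show False by simp
        qed
        then show ?thesis using fb by simp
      qed
      show "\<exists>p\<in>S. (f ^^ m) p = p \<and> (\<forall>i\<le>m. dist (xs i) ((f ^^ i) p) \<le> e)"
      proof (intro bexI[OF _ yS] conjI allI impI)
        show "(f^^m) y = y" by (rule fmy)
        fix i assume i: "i \<le> m"
        have "sp (Uf y) (xs i) ((f^^i) y)" using trY[OF i] unfolding eqv_def by (metis funpow_0)
        then have "dist (xs i) ((f^^i) y) < ep y" using cov_dist[of "Uf y" "xs i" "(f^^i) y" "ep y"] xsS[OF i] Uy by auto
        then show "dist (xs i) ((f^^i) y) \<le> e" using ep(2)[of y] by simp
      qed
    qed
  qed
  show ?thesis using equi shad by blast
qed

end
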